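(* Let $n$ be a positive integer and, for $k\in\{0,\dots,n-1\}$, let \[ b_k=(-1)^{n-k}\frac{n!}{k!}\binom{2n-k-1}{n-1},\qquad \beta_k=(-1)^{n-1}\frac{(2n-k-1)!}{k!\,(n-k-1)!}. \] Let $\widetilde\Delta(z)=z^n+\sum_{k=0}^{n-1}b_kz^k+e^{-z}\sum_{k=0}^{n-1}\beta_kz^k$. If $z\in\mathbb C$ is a root of $\widetilde\Delta$ with $z\neq0$, then $\operatorname{Re}z<0$. *)

theory Defs
  imports "HOL-Analysis.Analysis"
begin

definition b_coeff :: "nat \<Rightarrow> nat \<Rightarrow> complex" where
  "b_coeff n k = (-1) ^ (n - k) * (fact n / fact k) * of_nat ((2*n - k - 1) choose (n - 1))"

definition beta_coeff :: "nat \<Rightarrow> nat \<Rightarrow> complex" where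
  "beta_coeff n k = (-1) ^ (n - 1) * fact (2*n - k - 1) / (fact k * fact (n - k - 1))"

definition Delta_tilde :: "nat \<Rightarrow> complex \<Rightarrow> complex" where
  "Delta_tilde n z = z ^ n + (\<Sum>k<n. b_coeff n k * z ^ k)
                     + exp (- z) * (\<Sum>k<n. beta_coeff n k * z ^ k)"

end

theory Submission
  imports Defs "HOL-Computational_Algebra.Polynomial"
begin











definition rho :: "nat \<Rightarrow> real \<Rightarrow> real" where "rho n t = (t*(1-t))^(n-1)"

definition Kf :: "nat \<Rightarrow> nat \<Rightarrow> complex \<Rightarrow> complex" where
  "Kf n j w = integral {0..1} (\<lambda>t. of_real (t^j * rho n t) * exp (of_real t * w))"

lemma Kf_has_integral:
  "((\<lambda>t. of_real (t^j * rho n t) * exp (of_real t * w)) has_integral Kf n j w) {0..1}"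
  unfolding Kf_def rho_def
  by (intro integrable_integral integrable_continuous_interval continuous_intros)

lemma Kf_deriv: "(Kf n j has_field_derivative Kf n (Suc j) w) (at w)"
proof -
  have "((\<lambda>w. integral (cbox 0 1) (\<lambda>t. of_real (t^j * rho n t) * exp (of_real t * w)))
     has_field_derivative integral (cbox 0 1) (\<lambda>t. of_real (t^j * rho n t) * (of_real t * exp (of_real t * w)))) (at w within UNIV)"
    unfolding rho_def
    apply (rule leibniz_rule_field_derivative)
    apply (auto intro!: derivative_eq_intros integrable_continuous_interval continuous_intros simp: split_beta)
    done
  moreover have "(\<lambda>t. of_real (t^j * rho n t) * (of_real t * exp (of_real t * w))) = 
     (\<lambda>t. of_real (t^Suc j * rho n t) * exp (of_real t * w))"
    by (auto simp: fun_eq_iff)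
  ultimately show ?thesis unfolding Kf_def by (simp add: cbox_interval)
qed

lemma Kf_ode:
  assumes n: "n \<ge> 1"
  shows "w * Kf n 2 w + (2 * of_nat n - w) * Kf n 1 w - of_nat n * Kf n 0 w = 0"
proof -
  define F where "F = (\<lambda>z::complex. (z*(1-z))^n * exp (z*w))"
  define F' where "F' = (\<lambda>z::complex. of_nat n * (z*(1-z))^(n-1) * (1 - 2*z) * exp (z*w) + (z*(1-z))^n * (w * exp (z*w)))"
  have dF: "(F has_field_derivative F' z) (at z)" for z
    unfolding F_def F'_def
    by (auto intro!: derivative_eq_intros simp: algebra_simps)
  have ft: "((\<lambda>t. F' (of_real t)) has_integral (F (of_real 1) - F (of_real 0))) {0..1}"
    apply (rule fundamental_theorem_of_calculus)
     apply simp
    apply (rule has_vector_derivative_real_field [OF dF])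
    done
  have F01: "F (of_real 1) - F (of_real 0) = 0"
    using n by (simp add: F_def)
  have eq: "F' (of_real t) = - (w * (of_real (t^2 * rho n t) * exp (of_real t * w)) + (2 * of_nat n - w) * (of_real (t^1 * rho n t) * exp (of_real t * w)) - of_nat n * (of_real (t^0 * rho n t) * exp (of_real t * w)))" for t
  proof -
    define p where "p = (of_real t*(1-of_real t) :: complex)^(n-1)"
    have hp: "(of_real t*(1-of_real t) :: complex)^n = of_real t*(1-of_real t)*p"
      unfolding p_def using n by (metis Suc_diff_le diff_Suc_1 power_Suc)
    have r: "of_real (t^k * rho n t) = (of_real t)^k * p" for k
      by (simp add: rho_def p_def)
    have L: "F' (of_real t) = of_nat n * p * (1 - 2 * of_real t) * exp (of_real t*w) + (of_real t*(1-of_real t)*p) * (w * exp (of_real t*w))"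
      unfolding F'_def hp unfolding p_def by (rule refl)
    show ?thesis unfolding L r by algebra
  qed
  have comb: "((\<lambda>t. w * (of_real (t^2 * rho n t) * exp (of_real t * w)) + (2 * of_nat n - w) * (of_real (t^1 * rho n t) * exp (of_real t * w)) - of_nat n * (of_real (t^0 * rho n t) * exp (of_real t * w)))
     has_integral (w * Kf n 2 w + (2 * of_nat n - w) * Kf n 1 w - of_nat n * Kf n 0 w)) {0..1}"
    by (intro has_integral_diff has_integral_add has_integral_mult_right Kf_has_integral)
  have "((\<lambda>t. w * (of_real (t^2 * rho n t) * exp (of_real t * w)) + (2 * of_nat n - w) * (of_real (t^1 * rho n t) * exp (of_real t * w)) - of_nat n * (of_real (t^0 * rho n t) * exp (of_real t * w)))
     has_integral - 0) {0..1}"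
    using has_integral_neg[OF ft] unfolding F01 eq by simp
  from has_integral_unique[OF comb this] show ?thesis by simp
qed




lemma alg_ode:
  fixes l z p E A0 A1 A2 :: complex
  assumes ode: "(l*z) * A2 + (2 * of_nat n - l*z) * A1 - of_nat n * A0 = 0"
  shows "of_nat (2*n) * p * (E * (A1 - A0/2)) + (p*z) * (E * (-(l/2)) * (A1 - A0/2) + E * (l*A2 - l*A1/2)) = (l/4) * (p*z) * (E*A0)"
proof -
  have "of_nat (2*n) * p * (E * (A1 - A0/2)) + (p*z) * (E * (-(l/2)) * (A1 - A0/2) + E * (l*A2 - l*A1/2)) - (l/4) * (p*z) * (E*A0)
      = p * E * ((l*z) * A2 + (2 * of_nat n - l*z) * A1 - of_nat n * A0)"
    by (simp add: field_simps)
  then show ?thesis using ode by simp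
qed

lemma energy_ineq:
  fixes a b l :: complex and r :: real
  assumes "r \<ge> 0"
  shows "cmod l * ((cmod a)^2 + (cmod b)^2/4) + (Re (l*b*cnj a) + Re (l*a*cnj b))/2 + r \<ge> 0"
proof -
  have h1: "Re (l*b*cnj a) \<ge> - (cmod l * cmod b * cmod a)"
  proof -
    have "cmod (l*b*cnj a) = cmod l * cmod b * cmod a" by (simp add: norm_mult)
    then show ?thesis using abs_Re_le_cmod[of "l*b*cnj a"] by linarith
  qed
  have h2: "Re (l*a*cnj b) \<ge> - (cmod l * cmod b * cmod a)"
  proof -
    have "cmod (l*a*cnj b) = cmod l * cmod b * cmod a" by (simp add: norm_mult)
    then show ?thesis using abs_Re_le_cmod[of "l*a*cnj b"] by linarith
  qed
  have h3: "cmod l * ((cmod a)^2 + (cmod b)^2/4) - cmod l * cmod b * cmod a = cmod l * (cmod a - cmod b/2)^2"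
    by (simp add: algebra_simps power2_eq_square)
  have h4: "cmod l * (cmod a - cmod b/2)^2 \<ge> 0" by simp
  define P where "P = cmod l * ((cmod a)^2 + (cmod b)^2/4)"
  define Q where "Q = cmod l * cmod b * cmod a"
  define R where "R = cmod l * (cmod a - cmod b/2)^2"
  define X where "X = Re (l*b*cnj a)"
  define Y where "Y = Re (l*a*cnj b)"
  have "P - Q = R" "R \<ge> 0" "X \<ge> - Q" "Y \<ge> - Q"
    using h1 h2 h3 h4 unfolding P_def Q_def R_def X_def Y_def by auto
  then show ?thesis unfolding P_def[symmetric] X_def[symmetric] Y_def[symmetric] using assms unfolding add_divide_distrib by linarith
qed




lemma normsq_deriv:
  assumes "(f has_vector_derivative f') (at t)"
  shows "((\<lambda>t. Re (f t * cnj (f t))) has_real_derivative 2 * Re (f' * cnj (f t))) (at t)"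
proof -
  have "((\<lambda>t. f t * cnj (f t)) has_vector_derivative (f t * cnj f' + f' * cnj (f t))) (at t)"
    by (intro has_vector_derivative_mult has_vector_derivative_cnj assms)
  from has_field_derivative_Re[OF this]
  have "((\<lambda>t. Re (f t * cnj (f t))) has_real_derivative Re (f t * cnj f' + f' * cnj (f t))) (at t)" .
  moreover have "Re (f t * cnj f' + f' * cnj (f t)) = 2 * Re (f' * cnj (f t))" by simp
  ultimately show ?thesis by simp
qed


lemmas Kf_deriv_chain[derivative_intros] = Kf_deriv[THEN DERIV_chain2]

lemma ray_derivs:
  fixes l :: complex
  assumes n: "n \<ge> 1"
  defines "Uc \<equiv> (\<lambda>z. exp (-(l*z)/2) * Kf n 0 (l*z))"
      and "Wc \<equiv> (\<lambda>z. exp (-(l*z)/2) * (Kf n 1 (l*z) - Kf n 0 (l*z)/2))"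
  shows "(Uc has_field_derivative l * Wc z) (at z)"
    and "((\<lambda>z. z^(2*n) * Wc z) has_field_derivative (l/4) * z^(2*n) * Uc z) (at z)"
proof -
  show "(Uc has_field_derivative l * Wc z) (at z)"
    unfolding Uc_def Wc_def
    by (auto intro!: derivative_eq_intros simp: field_simps)
  define E where "E = exp (-(l*z)/2)"
  define A0 where "A0 = Kf n 0 (l*z)"
  define A1 where "A1 = Kf n 1 (l*z)"
  define A2 where "A2 = Kf n 2 (l*z)"
  define p where "p = z^(2*n-1)"
  have zp: "z^(2*n) = p*z" unfolding p_def using n
    by (metis One_nat_def Suc_diff_le mult_2 power_Suc2 add_leD1 diff_Suc_1 le_add1 Suc_le_lessD not_less_eq_eq)
  have dW: "(Wc has_field_derivative E * (-(l/2)) * (A1 - A0/2) + E * (l*A2 - l*A1/2)) (at z)"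
    unfolding Wc_def E_def A0_def A1_def A2_def
    by (auto intro!: derivative_eq_intros simp: field_simps numeral_2_eq_2)
  have dp: "((\<lambda>z. z^(2*n)) has_field_derivative of_nat (2*n) * p) (at z)"
    by (auto intro!: derivative_eq_intros simp: p_def)
  have D1: "((\<lambda>z. z^(2*n) * Wc z) has_field_derivative
        of_nat (2*n) * p * Wc z + (E * (-(l/2)) * (A1 - A0/2) + E * (l*A2 - l*A1/2)) * z^(2*n)) (at z)"
    by (rule DERIV_mult[OF dp dW])
  have eq1: "of_nat (2*n) * p * Wc z + (E * (-(l/2)) * (A1 - A0/2) + E * (l*A2 - l*A1/2)) * z^(2*n) =
     of_nat (2*n) * p * (E * (A1 - A0/2)) + (p*z) * (E * (-(l/2)) * (A1 - A0/2) + E * (l*A2 - l*A1/2))"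
    unfolding zp by (simp add: Wc_def E_def A0_def A1_def)
  have eq2: "of_nat (2*n) * p * (E * (A1 - A0/2)) + (p*z) * (E * (-(l/2)) * (A1 - A0/2) + E * (l*A2 - l*A1/2)) = (l/4) * z^(2*n) * Uc z"
  proof -
    have u: "Uc z = E*A0" by (simp add: Uc_def E_def A0_def)
    have ode: "(l*z) * A2 + (2 * of_nat n - l*z) * A1 - of_nat n * A0 = 0"
      using Kf_ode[OF n, of "l*z"] by (simp add: A0_def A1_def A2_def)
    show ?thesis unfolding zp u by (rule alg_ode[OF ode])
  qed
  show "((\<lambda>z. z^(2*n) * Wc z) has_field_derivative (l/4) * z^(2*n) * Uc z) (at z)" by (rule DERIV_cong[OF D1], rule trans[OF eq1 eq2])
qed





lemma Kf_real:
  "Kf n j (of_real r) = of_real (integral {0..1} (\<lambda>t. t^j * rho n t * exp (t*r)))"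
proof -
  have "((\<lambda>t. t^j * rho n t * exp (t*r)) has_integral integral {0..1} (\<lambda>t. t^j * rho n t * exp (t*r))) {0..1}"
    unfolding rho_def by (intro integrable_integral integrable_continuous_interval continuous_intros)
  from has_integral_linear[OF this bounded_linear_of_real]
  have "((\<lambda>t. (of_real (t^j * rho n t * exp (t*r)) :: complex)) has_integral of_real (integral {0..1} (\<lambda>t. t^j * rho n t * exp (t*r)))) {0..1}"
    by (simp add: o_def)
  moreover have "(\<lambda>t. (of_real (t^j * rho n t * exp (t*r)) :: complex)) = (\<lambda>t. of_real (t^j * rho n t) * exp (of_real t * of_real r))"
  proof
    fix t
    have "exp (of_real t * of_real r) = (of_real (exp (t*r)) :: complex)"
      by (metis exp_of_real of_real_mult)
    then show "(of_real (t^j * rho n t * exp (t*r)) :: complex) = of_real (t^j * rho n t) * exp (of_real t * of_real r)"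
      by simp
  qed
  ultimately have "((\<lambda>t. of_real (t^j * rho n t) * exp (of_real t * (of_real r :: complex))) has_integral of_real (integral {0..1} (\<lambda>t. t^j * rho n t * exp (t*r)))) {0..1}"
    by simp
  from has_integral_unique[OF Kf_has_integral this] show ?thesis .
qed

lemma Kf_real_pos:
  assumes n: "n \<ge> 1"
  shows "integral {0..1} (\<lambda>t. t^j * rho n t * exp (t*r)) > 0"
proof -
  define f where "f = (\<lambda>t::real. t^j * rho n t * exp (t*r))"
  have cont: "continuous_on (cbox 0 1) f" unfolding f_def rho_def by (intro continuous_intros)
  have nn: "f x \<ge> 0" if "x \<in> cbox 0 1" for x
    using that unfolding f_def rho_def by (auto intro!: mult_nonneg_nonneg zero_le_power)
  have "f (1/2) > 0" unfolding f_def rho_def by simp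
  moreover have "(1/2::real) \<in> cbox 0 1" by simp
  ultimately have ne: "\<not> (\<forall>x\<in>cbox 0 1. f x = 0)" by fastforce
  have bne: "box (0::real) 1 \<noteq> {}" by simp
  have "integral (cbox 0 1) f \<noteq> 0"
    using integral_cbox_eq_0_iff[OF cont bne nn] ne by blast
  moreover have "integral (cbox 0 1) f \<ge> 0"
    using integral_nonneg[OF integrable_continuous[OF cont] nn] .
  ultimately have "integral (cbox 0 1) f > 0" by linarith
  then show ?thesis unfolding f_def cbox_interval .
qed












lemma poly_exp_integral:
  fixes p :: "complex poly" and w :: complex
  assumes w: "w \<noteq> 0" and N: "(pderiv ^^ N) p = 0"
  defines "S \<equiv> (\<lambda>x. \<Sum>k<N. (-1)^k * poly ((pderiv ^^ k) p) x / w^(Suc k))"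
  shows "((\<lambda>t. poly p (of_real t) * exp (of_real t * w)) has_integral (exp w * S 1 - S 0)) {0..1}"
proof -
  define S' where "S' = (\<lambda>x. \<Sum>k<N. (-1)^k * poly ((pderiv ^^ Suc k) p) x / w^(Suc k))"
  have dS: "(S has_field_derivative S' x) (at x)" for x
    unfolding S_def S'_def
    using w by (auto intro!: derivative_eq_intros sum.cong simp: poly_DERIV[THEN DERIV_cong])
  define a where "a = (\<lambda>x k. (-1)^k * poly ((pderiv ^^ k) p) x / w^k)"
  have tel: "w * S x + S' x = poly p x" for x
  proof -
    have "w * S x = (\<Sum>k<N. a x k)"
      unfolding S_def a_def sum_distrib_left using w by (intro sum.cong) (auto simp: field_simps)
    moreover have "S' x = - (\<Sum>k<N. a x (Suc k))"
      unfolding S'_def a_def by (simp add: sum_negf[symmetric])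
    moreover have "a x N = 0" using N by (simp add: a_def)
    ultimately have "w * S x + S' x = (\<Sum>k<N. a x k) - (\<Sum>k<N. a x (Suc k))" by simp
    also have "\<dots> = (\<Sum>k<N. a x k - a x (Suc k))" by (simp add: sum_subtractf)
    also have "\<dots> = a x 0 - a x N" by (rule sum_lessThan_telescope')
    also have "\<dots> = poly p x" using \<open>a x N = 0\<close> by (simp add: a_def)
    finally show ?thesis .
  qed
  define G where "G = (\<lambda>z. exp (z * w) * S z)"
  have dG: "(G has_field_derivative poly p z * exp (z * w)) (at z)" for z
  proof -
    have e: "((\<lambda>z. exp (z*w)) has_field_derivative (w * exp (z*w))) (at z)"
      by (rule DERIV_fun_exp[THEN DERIV_cong]) (auto intro!: derivative_eq_intros)
    have "(G has_field_derivative (w * exp (z*w)) * S z + S' z * exp (z*w)) (at z)"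
      unfolding G_def by (rule DERIV_mult[OF e dS])
    moreover have "(w * exp (z*w)) * S z + S' z * exp (z*w) = (w * S z + S' z) * exp (z*w)"
      by (simp add: algebra_simps)
    then have "(w * exp (z*w)) * S z + S' z * exp (z*w) = poly p z * exp (z * w)"
      unfolding tel .
    ultimately show ?thesis by simp
  qed
  have "((\<lambda>t. poly p (of_real t) * exp (of_real t * w)) has_integral (G (of_real 1) - G (of_real 0))) {0..1}"
    by (rule fundamental_theorem_of_calculus) (auto intro: has_vector_derivative_real_field[OF dG])
  then show ?thesis by (simp add: G_def)
qed











lemma coeff_lin_power:
  "coeff ([:a, b:] ^ m) i = (if i \<le> m then of_nat (m choose i) * b ^ i * a ^ (m - i) else (0::'a::comm_ring_1))"
proof (cases "i \<le> m")
  case True then show ?thesis by (simp add: coeff_linear_poly_power)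
next
  case False
  have "degree ([:a, b:] ^ m) \<le> degree [:a,b:] * m" by (rule degree_power_le)
  also have "\<dots> \<le> m" by (cases "b = 0") auto
  finally show ?thesis using False by (simp add: coeff_eq_0)
qed


lemma poly_higher_pderiv_0:
  "poly ((pderiv ^^ k) p) 0 = fact k * coeff p (k::nat)"
  by (simp add: poly_0_coeff_0 coeff_higher_pderiv pochhammer_fact)

lemma higher_pderiv_reflect:
  fixes p :: "complex poly"
  shows "(pderiv ^^ k) (pcompose p [:1, -1:]) = smult ((-1)^k) (pcompose ((pderiv ^^ k) p) [:1, -1:])"
proof (induction k)
  case 0 then show ?case by simp
next
  case (Suc k)
  have d: "pderiv [:1, -1::complex:] = [:-1:]" by (simp add: pderiv_pCons)
  have "(pderiv ^^ Suc k) (pcompose p [:1, -1:]) = pderiv (smult ((-1)^k) (pcompose ((pderiv ^^ k) p) [:1, -1:]))"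
    using Suc by simp
  also have "\<dots> = smult ((-1)^k) (pcompose (pderiv ((pderiv ^^ k) p)) [:1, -1:] * [:-1:])"
    by (simp only: pderiv_smult pderiv_pcompose d)
  also have "\<dots> = smult ((-1)^Suc k) (pcompose ((pderiv ^^ Suc k) p) [:1, -1:])"
    by simp
  finally show ?case .
qed

lemma poly_higher_pderiv_1:
  fixes p :: "complex poly"
  shows "poly ((pderiv ^^ k) p) 1 = (-1)^k * fact k * coeff (pcompose p [:1, -1:]) k"
proof -
  have "poly ((pderiv ^^ k) (pcompose p [:1, -1:])) 0 = (-1)^k * poly ((pderiv ^^ k) p) 1"
    by (simp add: higher_pderiv_reflect poly_pcompose)
  then have "(-1)^k * fact k * coeff (pcompose p [:1, -1:]) k = (-1)^k * ((-1)^k * poly ((pderiv ^^ k) p) 1)"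
    by (simp add: poly_higher_pderiv_0 mult.assoc)
  also have "\<dots> = poly ((pderiv ^^ k) p) 1"
    by (simp add: mult.assoc[symmetric] power_mult_distrib[symmetric])
  finally show ?thesis by simp
qed

definition PP :: "nat \<Rightarrow> complex poly" where
  "PP n = monom 1 n * [:1, -1:] ^ (n - 1)"

lemma poly_PP: "poly (PP n) x = x ^ n * (1 - x) ^ (n - 1)"
  by (simp add: PP_def poly_monom)

lemma PP_reflect: "pcompose (PP n) [:1, -1:] = monom 1 (n - 1) * [:1, -1:] ^ n"
proof -
  have "poly (pcompose (PP n) [:1, -1:]) = poly (monom 1 (n - 1) * [:1, -1:] ^ n)"
    by (auto simp: fun_eq_iff poly_pcompose poly_PP poly_monom)
  then show ?thesis by (simp add: poly_eq_poly_eq_iff)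
qed

lemma coeff_PP: "coeff (PP n) k = (if n \<le> k \<and> k - n \<le> n - 1 then (-1)^(k-n) * of_nat ((n - 1) choose (k - n)) else 0)"
  by (auto simp: PP_def coeff_monom_mult coeff_lin_power)

lemma coeff_PP_reflect: "coeff (pcompose (PP n) [:1, -1:]) k =
   (if n - 1 \<le> k \<and> k - (n - 1) \<le> n then (-1)^(k - (n - 1)) * of_nat (n choose (k - (n - 1))) else 0)"
  by (auto simp: PP_reflect coeff_monom_mult coeff_lin_power)

lemma PP_pderiv_vanish:
  assumes "n \<ge> 1" shows "(pderiv ^^ (2*n)) (PP n) = 0"
proof (rule poly_eqI)
  fix i
  show "coeff ((pderiv ^^ (2*n)) (PP n)) i = coeff 0 i"
    using assms by (simp add: coeff_higher_pderiv coeff_PP)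
qed

lemma c1_lt:
  assumes "j < n"
  shows "fact (2*n - Suc j) * coeff (pcompose (PP n) [:1, -1:]) (2*n - Suc j) = fact (n-1) * b_coeff n j"
proof -
  have k1: "2*n - Suc j - (n - 1) = n - j" using assms by auto
  have c: "coeff (pcompose (PP n) [:1, -1:]) (2*n - Suc j) = (-1)^(n-j) * of_nat (n choose (n - j))"
    using assms by (simp add: coeff_PP_reflect k1)
  have e1: "fact (n-j) * fact j * (n choose (n-j)) = (fact n :: nat)"
    using binomial_fact_lemma[of "n-j" n] assms by (simp add: mult_ac)
  have e2: "fact (n-1) * fact (n-j) * ((2*n - Suc j) choose (n-1)) = (fact (2*n - Suc j) :: nat)"
    using binomial_fact_lemma[of "n-1" "2*n - Suc j"] assms
    by (simp add: mult_ac)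
  have "fact (n-j) * (fact (2*n - Suc j) * (n choose (n-j)) * fact j) = fact (n-j) * (fact (n-1) * fact n * ((2*n - Suc j) choose (n-1)) :: nat)"
  proof -
    have "fact (n-j) * (fact (2*n - Suc j) * (n choose (n-j)) * fact j) = (fact (n-j) * fact j * (n choose (n-j))) * (fact (2*n - Suc j) :: nat)"
      by (simp only: mult_ac)
    also have "\<dots> = fact n * fact (2*n - Suc j)" by (simp only: e1)
    also have "\<dots> = fact n * (fact (n-1) * fact (n-j) * ((2*n - Suc j) choose (n-1)))" by (simp only: e2)
    also have "\<dots> = fact (n-j) * (fact (n-1) * fact n * ((2*n - Suc j) choose (n-1)))" by (simp only: mult_ac)
    finally show ?thesis .
  qed
  then have e3: "fact (2*n - Suc j) * (n choose (n-j)) * fact j = (fact (n-1) * fact n * ((2*n - Suc j) choose (n-1)) :: nat)"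
    by simp
  have e4: "(fact (2*n - Suc j) * of_nat (n choose (n-j)) :: complex) = fact (n-1) * (fact n / fact j) * of_nat ((2*n - Suc j) choose (n-1))"
  proof -
    have "(of_nat (fact (2*n - Suc j) * (n choose (n-j)) * fact j) :: complex) = of_nat (fact (n-1) * fact n * ((2*n - Suc j) choose (n-1)))"
      using e3 by simp
    then show ?thesis by (simp add: field_simps)
  qed
  have "(-1)^(n-j) * (fact (2*n - Suc j) * of_nat (n choose (n-j))) = (-1)^(n-j) * (fact (n-1) * (fact n / fact j) * of_nat ((2*n - Suc j) choose (n-1)) :: complex)"
    using e4 by simp
  then show ?thesis unfolding c b_coeff_def
    by (simp add: mult_ac diff_diff_left)
qed


lemma c0_lt:
  assumes "j < n"
  shows "(-1)^(2*n - Suc j) * fact (2*n - Suc j) * coeff (PP n) (2*n - Suc j) = - fact (n-1) * beta_coeff n j"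
proof -
  have k1: "2*n - Suc j - n = n - 1 - j" using assms by auto
  have c: "coeff (PP n) (2*n - Suc j) = (-1)^(n-1-j) * of_nat ((n-1) choose (n-1-j))"
  proof -
    have cond: "n \<le> 2*n - Suc j \<and> 2*n - Suc j - n \<le> n - 1" using assms by auto
    show ?thesis unfolding coeff_PP using cond by (simp only: if_True k1 simp_thms)
  qed
  have e1: "fact (n-1-j) * fact j * ((n-1) choose (n-1-j)) = (fact (n-1) :: nat)"
    using binomial_fact_lemma[of "n-1-j" "n-1"] assms by (simp add: mult_ac)
  have sgn: "(-1)^(2*n - Suc j) * (-1)^(n-1-j) = - ((-1)^(n-1) :: complex)"
  proof -
    have "(-1)^(2*n - Suc j) * (-1)^(n-1-j) = ((-1)^(n + 2*(n-1-j)) :: complex)"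
    proof -
      have "2*n - Suc j + (n-1-j) = n + 2*(n-1-j)" using assms by auto
      then show ?thesis by (metis power_add)
    qed
    also have "\<dots> = (-1)^n" by (simp add: power_add power_mult)
    also have "\<dots> = - 1 * (-1::complex)^(n-1)" using assms
      by (cases n) auto
    finally show ?thesis by simp
  qed
  have e2: "(of_nat ((n-1) choose (n-1-j)) :: complex) = fact (n-1) / (fact j * fact (n-1-j))"
  proof -
    have "(of_nat (fact (n-1-j) * fact j * ((n-1) choose (n-1-j))) :: complex) = of_nat (fact (n-1))"
      using e1 by simp
    then show ?thesis by (simp add: field_simps)
  qed
  have "(-1)^(2*n - Suc j) * fact (2*n - Suc j) * coeff (PP n) (2*n - Suc j)
      = ((-1)^(2*n - Suc j) * (-1)^(n-1-j)) * fact (2*n - Suc j) * (fact (n-1) / (fact j * fact (n-1-j)) :: complex)"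
    unfolding c e2 by (simp add: mult_ac)
  also have "\<dots> = - fact (n-1) * beta_coeff n j"
    unfolding sgn beta_coeff_def by (simp add: diff_diff_left mult_ac)
  finally show ?thesis .
qed

lemma c0_ge:
  assumes "n \<le> j" "n \<ge> 1" shows "coeff (PP n) (2*n - Suc j) = 0"
  using assms by (auto simp: coeff_PP)

lemma c1_gt:
  assumes "n < j" "j < 2*n" shows "coeff (pcompose (PP n) [:1, -1:]) (2*n - Suc j) = 0"
  using assms by (auto simp: coeff_PP_reflect)

lemma c1_eq:
  assumes "n \<ge> 1" shows "coeff (pcompose (PP n) [:1, -1:]) (2*n - Suc n) = 1"
  using assms by (simp add: coeff_PP_reflect)


lemma split_sum_2n:
  fixes f :: "nat \<Rightarrow> complex"
  assumes n: "n \<ge> 1" and z: "\<And>j. n < j \<Longrightarrow> j < 2*n \<Longrightarrow> f j = 0"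
  shows "(\<Sum>j<2*n. f j) = (\<Sum>j<n. f j) + f n"
proof -
  have e: "{..<2*n} = {..<n} \<union> ({n} \<union> {Suc n..<2*n})" using n by auto
  have "(\<Sum>j<2*n. f j) = (\<Sum>j<n. f j) + (\<Sum>j\<in>{n} \<union> {Suc n..<2*n}. f j)"
    unfolding e by (rule sum.union_disjoint) auto
  also have "(\<Sum>j\<in>{n} \<union> {Suc n..<2*n}. f j) = f n + (\<Sum>j\<in>{Suc n..<2*n}. f j)"
    by (subst sum.union_disjoint) auto
  also have "(\<Sum>j\<in>{Suc n..<2*n}. f j) = 0"
    by (rule sum.neutral) (auto intro: z)
  finally show ?thesis by simp
qed

lemma PP_sum_identity:
  fixes w :: complex
  assumes n: "n \<ge> 1" and w: "w \<noteq> 0"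
  defines "S \<equiv> (\<lambda>x. \<Sum>k<2*n. (-1)^k * poly ((pderiv ^^ k) (PP n)) x / w^(Suc k))"
  shows "w^(2*n) * (exp w * S 1 - S 0) = fact (n-1) * exp w * Delta_tilde n w"
proof -
  have A: "w^(2*n) * S x = (\<Sum>j<2*n. (-1)^(2*n - Suc j) * poly ((pderiv ^^ (2*n - Suc j)) (PP n)) x * w^j)" for x
  proof -
    have "w^(2*n) * S x = (\<Sum>k<2*n. (-1)^k * poly ((pderiv ^^ k) (PP n)) x * w^(2*n - Suc k))"
      unfolding S_def sum_distrib_left
    proof (rule sum.cong)
      fix k assume "k \<in> {..<2*n}"
      then have "w^(2*n - Suc k) = w^(2*n) / w^(Suc k)" using w by (simp add: power_diff)
      then show "w^(2*n) * ((-1)^k * poly ((pderiv ^^ k) (PP n)) x / w^(Suc k)) = (-1)^k * poly ((pderiv ^^ k) (PP n)) x * w^(2*n - Suc k)"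
        by simp
    qed simp
    also have "\<dots> = (\<Sum>j<2*n. (-1)^(2*n - Suc j) * poly ((pderiv ^^ (2*n - Suc j)) (PP n)) x * w^(2*n - Suc (2*n - Suc j)))"
      by (rule sum.nat_diff_reindex[symmetric])
    also have "\<dots> = (\<Sum>j<2*n. (-1)^(2*n - Suc j) * poly ((pderiv ^^ (2*n - Suc j)) (PP n)) x * w^j)"
      by (rule sum.cong) (auto simp: Suc_diff_Suc)
    finally show ?thesis .
  qed
  have B1: "(-1)^(2*n - Suc j) * poly ((pderiv ^^ (2*n - Suc j)) (PP n)) 1 * w^j =
     (if j < n then fact (n-1) * b_coeff n j * w^j else if j = n then fact (n-1) * w^j else 0)" if "j < 2*n" for j
  proof -
    have "(-1)^(2*n - Suc j) * poly ((pderiv ^^ (2*n - Suc j)) (PP n)) 1 =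
      fact (2*n - Suc j) * coeff (pcompose (PP n) [:1, -1:]) (2*n - Suc j)"
      unfolding poly_higher_pderiv_1 by (simp add: mult.assoc[symmetric] power_mult_distrib[symmetric])
    moreover have "n - Suc 0 = 2*n - Suc n" by simp
    ultimately show ?thesis using c1_lt[of j n] c1_gt[of n j] c1_eq[OF n] that by auto
  qed
  have B0: "(-1)^(2*n - Suc j) * poly ((pderiv ^^ (2*n - Suc j)) (PP n)) 0 * w^j =
     (if j < n then - fact (n-1) * beta_coeff n j * w^j else 0)" if "j < 2*n" for j
  proof (cases "j < n")
    case True
    have "(-1)^(2*n - Suc j) * poly ((pderiv ^^ (2*n - Suc j)) (PP n)) 0 * w^j =
      ((-1)^(2*n - Suc j) * fact (2*n - Suc j) * coeff (PP n) (2*n - Suc j)) * w^j"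
      by (simp add: poly_higher_pderiv_0)
    then show ?thesis using c0_lt[OF True] True by simp
  next
    case False then show ?thesis using c0_ge[of n j] n by (simp add: poly_higher_pderiv_0)
  qed
  have S1: "w^(2*n) * S 1 = fact (n-1) * (w^n + (\<Sum>j<n. b_coeff n j * w^j))"
  proof -
    have "w^(2*n) * S 1 = (\<Sum>j<2*n. (if j < n then fact (n-1) * b_coeff n j * w^j else if j = n then fact (n-1) * w^j else 0))"
      unfolding A by (rule sum.cong) (auto simp: B1)
    also have "\<dots> = (\<Sum>j<n. (if j < n then fact (n-1) * b_coeff n j * w^j else if j = n then fact (n-1) * w^j else 0)) + fact (n-1) * w^n"
      by (subst split_sum_2n[OF n]) auto
    also have "\<dots> = fact (n-1) * (w^n + (\<Sum>j<n. b_coeff n j * w^j))"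
      by (simp add: sum_distrib_left algebra_simps)
    finally show ?thesis .
  qed
  have S0: "w^(2*n) * S 0 = - fact (n-1) * (\<Sum>j<n. beta_coeff n j * w^j)"
  proof -
    have "w^(2*n) * S 0 = (\<Sum>j<2*n. (if j < n then - fact (n-1) * beta_coeff n j * w^j else 0))"
      unfolding A by (rule sum.cong) (auto simp: B0)
    also have "\<dots> = (\<Sum>j<n. (if j < n then - fact (n-1) * beta_coeff n j * w^j else 0))"
      by (subst split_sum_2n[OF n]) auto
    also have "\<dots> = - fact (n-1) * (\<Sum>j<n. beta_coeff n j * w^j)"
      by (simp add: sum_distrib_left algebra_simps sum_negf)
    finally show ?thesis .
  qed
  have "w^(2*n) * (exp w * S 1 - S 0) = exp w * (w^(2*n) * S 1) - w^(2*n) * S 0"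
    by (simp add: algebra_simps)
  also have "\<dots> = fact (n-1) * exp w * (w^n + (\<Sum>j<n. b_coeff n j * w^j)) + fact (n-1) * (exp w * exp (-w)) * (\<Sum>j<n. beta_coeff n j * w^j)"
    unfolding S1 S0 by (simp add: exp_minus_inverse algebra_simps)
  also have "\<dots> = fact (n-1) * exp w * Delta_tilde n w"
    unfolding Delta_tilde_def by (simp add: algebra_simps)
  finally show ?thesis .
qed




lemma Im_mult_ofr: "Im (a * complex_of_real r) = Im a * r"
  by simp

lemma Re_half_lemma: "2 * Re (P + Q) / 4 = Re P / 2 + Re Q / 2"
  by simp

lemma energy_contra:
  fixes l :: complex
  assumes n: "n \<ge> 1" and K1: "Kf n 1 l = 0" and re: "Re l \<ge> 0" and im: "Im l \<noteq> 0"
  shows False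
proof -
  define Uc where "Uc = (\<lambda>z. exp (-(l*z)/2) * Kf n 0 (l*z))"
  define Wc where "Wc = (\<lambda>z. exp (-(l*z)/2) * (Kf n 1 (l*z) - Kf n 0 (l*z)/2))"
  have dU: "(Uc has_field_derivative l * Wc z) (at z)" for z
    unfolding Uc_def Wc_def by (rule ray_derivs(1)[OF n])
  have dX: "((\<lambda>z. z^(2*n) * Wc z) has_field_derivative (l/4) * z^(2*n) * Uc z) (at z)" for z
    unfolding Uc_def Wc_def by (rule ray_derivs(2)[OF n])
  have dP: "((\<lambda>z. z^(2*n)) has_field_derivative of_nat (2*n) * z^(2*n-1)) (at z)" for z :: complex
    by (auto intro!: derivative_eq_intros)
  have dY: "((\<lambda>z. z^(2*n) * Uc z) has_field_derivative of_nat (2*n) * z^(2*n-1) * Uc z + l * Wc z * z^(2*n)) (at z)" for z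
    by (rule DERIV_mult[OF dP dU])
  define u where "u = (\<lambda>t::real. Uc (of_real t))"
  define w where "w = (\<lambda>t::real. Wc (of_real t))"
  define x where "x = (\<lambda>t::real. (of_real t)^(2*n) * w t)"
  define y where "y = (\<lambda>t::real. (of_real t)^(2*n) * u t)"
  have du: "(u has_vector_derivative l * w t) (at t)" for t
    unfolding u_def w_def by (rule has_vector_derivative_real_field[OF dU])
  have dx: "(x has_vector_derivative (l/4) * (of_real t)^(2*n) * u t) (at t)" for t
    unfolding x_def u_def w_def by (rule has_vector_derivative_real_field[OF dX])
  have dy: "(y has_vector_derivative of_nat (2*n) * (of_real t)^(2*n-1) * u t + l * w t * (of_real t)^(2*n)) (at t)" for t
    unfolding y_def u_def w_def by (rule has_vector_derivative_real_field[OF dY])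
  have n0: "2*n \<noteq> 0" using n by simp
  have x0: "x 0 = 0" using n0 by (simp add: x_def)
  have u1: "u 1 = exp (-l/2) * Kf n 0 l" by (simp add: u_def Uc_def)
  have w1: "w 1 = - u 1 / 2" using K1 by (simp add: w_def Wc_def u1)
  have x1: "x 1 = w 1" by (simp add: x_def)
  have y1: "y 1 = u 1" by (simp add: y_def)
  define psi where "psi = (\<lambda>t. Im l * Im (l * x t * cnj (u t)))"
  have dpsi: "(psi has_real_derivative Im l * Im (l * x t * cnj (l * w t) + l * ((l/4) * (of_real t)^(2*n) * u t) * cnj (u t))) (at t)" for t
  proof -
    have "((\<lambda>t. (l * x t) * cnj (u t)) has_vector_derivative (l * x t * cnj (l * w t) + l * ((l/4) * (of_real t)^(2*n) * u t) * cnj (u t))) (at t)"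
      by (intro has_vector_derivative_mult has_vector_derivative_mult_right has_vector_derivative_cnj dx du)
    from DERIV_cmult[OF has_field_derivative_Im[OF this], of "Im l"]
    show ?thesis unfolding psi_def by simp
  qed
  have psi_nonneg: "Im l * Im (l * x t * cnj (l * w t) + l * ((l/4) * (of_real t)^(2*n) * u t) * cnj (u t)) \<ge> 0" for t
  proof -
    have e1: "l * x t * cnj (l * w t) = of_real (t^(2*n) * (cmod (l * w t))^2)"
    proof -
      have "l * x t * cnj (l * w t) = of_real (t^(2*n)) * ((l * w t) * cnj (l * w t))"
        by (simp add: x_def mult_ac)
      also have "\<dots> = of_real (t^(2*n)) * of_real ((cmod (l * w t))^2)"
        by (simp only: complex_norm_square)
      finally show ?thesis by simp
    qed
    have e2: "l * ((l/4) * (of_real t)^(2*n) * u t) * cnj (u t) = (l * l) * of_real (t^(2*n) * (cmod (u t))^2 / 4)"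
    proof -
      have "l * ((l/4) * (of_real t)^(2*n) * u t) * cnj (u t) = (l * l) * (of_real (t^(2*n) / 4) * (u t * cnj (u t)))"
        by (simp add: mult_ac)
      also have "\<dots> = (l * l) * (of_real (t^(2*n) / 4) * of_real ((cmod (u t))^2))"
        by (simp only: complex_norm_square)
      finally show ?thesis by simp
    qed
    have "Im l * Im (l * x t * cnj (l * w t) + l * ((l/4) * (of_real t)^(2*n) * u t) * cnj (u t))
        = Re l * ((Im l)^2 * (t^(2*n) * (cmod (u t))^2)) / 2"
      unfolding e1 e2 by (simp add: power2_eq_square algebra_simps)
    also have "\<dots> \<ge> 0" using re by (simp add: zero_le_even_power)
    finally show ?thesis .
  qed
  have "psi 0 \<le> psi 1"
    by (rule DERIV_nonneg_imp_nondecreasing[of 0 1 psi]) (use dpsi psi_nonneg in auto)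
  moreover have "psi 0 = 0" by (simp add: psi_def x0)
  moreover have "psi 1 = - ((Im l)^2 * (cmod (u 1))^2 / 2)"
  proof -
    have "l * x 1 * cnj (u 1) = - (l/2) * of_real ((cmod (u 1))^2)"
      unfolding x1 w1 complex_norm_square by (simp add: mult_ac)
    then have "psi 1 = Im l * Im (- (l/2) * of_real ((cmod (u 1))^2))" unfolding psi_def by (simp only:)
    also have "\<dots> = - ((Im l)^2 * (cmod (u 1))^2 / 2)"
      by (simp only: Im_mult_ofr) (simp add: power2_eq_square)
    finally show ?thesis .
  qed
  ultimately have "(Im l)^2 * (cmod (u 1))^2 \<le> 0" by simp
  then have "cmod (u 1) = 0" using im
    by (metis mult_le_0_iff not_less power2_less_0 zero_less_power2 norm_ge_zero power_zero_numeral)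
  then have u1z: "u 1 = 0" by simp
  then have w1z: "w 1 = 0" using w1 by simp
  define c where "c = cmod l"
  define En where "En = (\<lambda>t. Re (x t * cnj (x t)) + Re (y t * cnj (y t)) / 4)"
  define D where "D = (\<lambda>t. 2 * Re ((l/4) * (of_real t)^(2*n) * u t * cnj (x t)) +
       2 * Re ((of_nat (2*n) * (of_real t)^(2*n-1) * u t + l * w t * (of_real t)^(2*n)) * cnj (y t)) / 4)"
  have dEn: "(En has_real_derivative D t) (at t)" for t
    unfolding En_def D_def
    by (intro DERIV_add DERIV_cdivide normsq_deriv dx dy)
  define F where "F = (\<lambda>t. exp (c * t) * En t)"
  have dF: "(F has_real_derivative exp (c * t) * (c * En t + D t)) (at t)" for t
  proof -
    have "((\<lambda>t. exp (c*t)) has_real_derivative exp (c*t) * c) (at t)"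
      by (auto intro!: derivative_eq_intros)
    from DERIV_mult[OF this dEn] show ?thesis unfolding F_def by (simp add: algebra_simps)
  qed
  have nsq: "Re (z * cnj z) = (cmod z)^2" for z
    using complex_norm_square[of z] by (metis Re_complex_of_real)
  have F_nonneg: "exp (c * t) * (c * En t + D t) \<ge> 0" if t0: "t \<ge> 0" for t
  proof -
    define r where "r = Re (of_nat (2*n) * (of_real t)^(2*n-1) * u t * cnj (y t)) / 2"
    have r0: "r \<ge> 0"
    proof -
      have "of_nat (2*n) * (of_real t)^(2*n-1) * u t * cnj (y t) = of_real (of_nat (2*n) * t^(2*n-1) * t^(2*n)) * (u t * cnj (u t))"
        by (simp add: y_def mult_ac)
      then have "of_nat (2*n) * (of_real t)^(2*n-1) * u t * cnj (y t) = of_real (of_nat (2*n) * t^(2*n-1) * t^(2*n)) * of_real ((cmod (u t))^2)"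
        by (simp only: complex_norm_square)
      then have "r = (of_nat (2*n) * t^(2*n-1) * t^(2*n)) * (cmod (u t))^2 / 2"
        unfolding r_def by (simp only: of_real_mult[symmetric] Re_complex_of_real)
      then show ?thesis using t0 by simp
    qed
    have ex: "2 * Re ((l/4) * (of_real t)^(2*n) * u t * cnj (x t)) = Re (l * y t * cnj (x t)) / 2"
      by (simp add: y_def mult_ac)
    have ey: "2 * Re ((of_nat (2*n) * (of_real t)^(2*n-1) * u t + l * w t * (of_real t)^(2*n)) * cnj (y t)) / 4
        = r + Re (l * x t * cnj (y t)) / 2"
    proof -
      have "(of_nat (2*n) * (of_real t)^(2*n-1) * u t + l * w t * (of_real t)^(2*n)) * cnj (y t) = of_nat (2*n) * (of_real t)^(2*n-1) * u t * cnj (y t) + l * x t * cnj (y t)"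
        by (simp add: x_def algebra_simps)
      then show ?thesis unfolding r_def using Re_half_lemma by metis
    qed
    have "c * En t + D t = cmod l * ((cmod (x t))^2 + (cmod (y t))^2/4) + (Re (l*y t*cnj (x t)) + Re (l*x t*cnj (y t)))/2 + r"
      unfolding En_def D_def ex ey c_def nsq by (simp add: field_simps)
    also have "\<dots> \<ge> 0" by (rule energy_ineq[OF r0])
    finally show ?thesis by simp
  qed
  have En1: "En 1 = 0" using x1 y1 w1z u1z by (simp add: En_def)
  have En_nonneg: "En t \<ge> 0" for t unfolding En_def nsq by simp
  have u_zero: "u t = 0" if t: "t \<in> {0<..1}" for t
  proof -
    have "F t \<le> F 1"
    proof (rule DERIV_nonneg_imp_nondecreasing[of t 1 F])
      show "t \<le> 1" using t by simp
      fix s assume "t \<le> s" "s \<le> 1"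
      then have "s \<ge> 0" using t by simp
      then show "\<exists>y. (F has_real_derivative y) (at s) \<and> 0 \<le> y"
        using dF[of s] F_nonneg[of s] by blast
    qed
    then have "En t \<le> 0" using En1 by (simp add: F_def mult_le_0_iff)
    then have h: "(cmod (x t))^2 + (cmod (y t))^2/4 \<le> 0" unfolding En_def nsq .
    have "(cmod (x t))^2 \<ge> 0" "(cmod (y t))^2 \<ge> 0" by simp_all
    then have "(cmod (y t))^2 \<le> 0" using h by linarith
    then have "y t = 0" by simp
    then show "u t = 0" using t by (simp add: y_def)
  qed
  have cont: "continuous_on {0..1} u"
    using du by (intro continuous_at_imp_continuous_on ballI has_vector_derivative_continuous) auto
  have "u 0 = 0"
    using continuous_constant_on_closure[of "{0<..(1::real)}" u 0 0] cont u_zero by simp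
  moreover have "u 0 = of_real (integral {0..1} (\<lambda>t. t^0 * rho n t * exp (t*0)))"
    using Kf_real[of n 0 0] by (simp add: u_def Uc_def)
  moreover have "integral {0..1} (\<lambda>t. t^0 * rho n t * exp (t*0)) > 0"
    by (rule Kf_real_pos[OF n])
  ultimately show False by simp
qed

lemma Kf1_eq:
  assumes n: "n \<ge> 1" and z: "z \<noteq> 0"
  shows "z^(2*n) * Kf n 1 z = fact (n-1) * exp z * Delta_tilde n z"
proof -
  define S where "S = (\<lambda>x. \<Sum>k<2*n. (-1)^k * poly ((pderiv ^^ k) (PP n)) x / z^(Suc k))"
  have int: "((\<lambda>t. poly (PP n) (of_real t) * exp (of_real t * z)) has_integral (exp z * S 1 - S 0)) {0..1}"
    unfolding S_def by (rule poly_exp_integral[OF z PP_pderiv_vanish[OF n]])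
  have eqf: "(\<lambda>t. of_real (t^1 * rho n t) * exp (of_real t * z)) = (\<lambda>t. poly (PP n) (of_real t) * exp (of_real t * z))"
  proof
    fix t :: real
    have "t^1 * rho n t = t^n * (1-t)^(n-1)"
    proof -
      have "t^1 * rho n t = t * t^(n-1) * (1-t)^(n-1)" by (simp add: rho_def power_mult_distrib)
      also have "t * t^(n-1) = t^n" using n by (metis Suc_diff_le diff_Suc_1 power_Suc)
      finally show ?thesis .
    qed
    then show "of_real (t^1 * rho n t) * exp (of_real t * z) = poly (PP n) (of_real t) * exp (of_real t * z)"
      by (simp add: poly_PP)
  qed
  have "Kf n 1 z = exp z * S 1 - S 0"
    using has_integral_unique[OF Kf_has_integral[of 1 n z] int[folded eqf]] .
  then show ?thesis using PP_sum_identity[OF n z] unfolding S_def by simp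
qed

theorem lemma4p6:
  fixes n :: nat and z :: complex
  assumes "n \<ge> 1" and "Delta_tilde n z = 0" and "z \<noteq> 0"
  shows "Re z < 0"
proof (rule ccontr)
  assume "\<not> Re z < 0"
  then have re: "Re z \<ge> 0" by simp
  have "z^(2*n) * Kf n 1 z = 0" using Kf1_eq[OF assms(1,3)] assms(2) by simp
  then have K1: "Kf n 1 z = 0" using assms(3) by simp
  show False
  proof (cases "Im z = 0")
    case True
    then have zr: "z = of_real (Re z)" by (simp add: complex_eq_iff)
    have "Kf n 1 z = of_real (integral {0..1} (\<lambda>t. t^1 * rho n t * exp (t * Re z)))"
      by (subst zr) (rule Kf_real)
    moreover have "integral {0..1} (\<lambda>t. t^1 * rho n t * exp (t * Re z)) > 0"
      by (rule Kf_real_pos[OF assms(1)])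
    ultimately show False using K1 by simp
  next
    case False
    show False by (rule energy_contra[OF assms(1) K1 re False])
  qed
qed

end
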